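(* With the construction described in the context, for every fixed $\varepsilon>0$, as $N\to+\infty$, $$\frac{1}{\sum_{n\in\mathbb{N}}f(n)^2}\sum_{n\in\mathbb{N}}\frac{f(n)h(n)}{n^{\sigma}}\sum_{\substack{q\mid n\\ q\le n/N^{\varepsilon}}}f(q)q^{\sigma}=o(\mathcal{A}_N),$$ where the implied rate of convergence depends only on $\varepsilon$.
   Context: Notation: $\log_2 x=\log\log x$, $\log_3 x=\log\log\log x$. Fix $A>0$. Let $N$ be a large parameter and $\sigma=\frac12+\frac{A}{\log_2 N}$. Fix $\gamma\in(0,(e-1)^{-1})$. Let $\mathcal{P}$ be the set of primes $p$ with $e\log N\log_2 N<p\le \exp((\log_2 N)^{\gamma})\log N\log_2 N$. Let $f$ be the multiplicative function supported on squarefree integers (so $f(1)=1$) with $f(p)=\dfrac{(\log N)^{1-\sigma}(\log_2 N)^{\sigma}}{(\log_3 N)^{1-\sigma}}\cdot\dfrac{1}{p^{\sigma}(\log p-\log_2 N-\log_3 N)}$ for $p\in\mathcal{P}$ and $f(p)=0$ for primes $p\notin\mathcal{P}$. Let $h$ be the multiplicative function $h(n)=\prod_{p\mid n}\frac{p}{p+1}$ ($h(1)=1$). Define $$\mathcal{A}_N=\frac{1}{\sum_{n\in\mathbb{N}}f(n)^2}\sum_{n\in\mathbb{N}}\frac{f(n)h(n)}{n^{\sigma}}\sum_{q\mid n}f(q)q^{\sigma}=\prod_{p\in\mathcal{P}}\frac{1+f(p)^2h(p)+f(p)h(p)p^{-\sigma}}{1+f(p)^2}.$$ *)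

theory Defs
  imports "HOL-Analysis.Analysis" "HOL-Computational_Algebra.Computational_Algebra"
    "HOL-Library.Landau_Symbols"
begin

definition sig :: "real \<Rightarrow> real \<Rightarrow> real" where
  "sig A N = 1/2 + A / ln (ln N)"

definition Pset :: "real \<Rightarrow> real \<Rightarrow> nat set" where
  "Pset \<gamma> N = {p. prime p \<and> exp 1 * ln N * ln (ln N) < real p \<and>
      real p \<le> exp (ln (ln N) powr \<gamma>) * ln N * ln (ln N)}"

definition fp :: "real \<Rightarrow> real \<Rightarrow> real \<Rightarrow> nat \<Rightarrow> real" where
  "fp A \<gamma> N p = (if p \<in> Pset \<gamma> N then
      (ln N powr (1 - sig A N) * ln (ln N) powr (sig A N) / ln (ln (ln N)) powr (1 - sig A N))
      * (1 / (real p powr (sig A N) * (ln (real p) - ln (ln N) - ln (ln (ln N)))))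
    else 0)"

text \<open>Multiplicative function supported on squarefree integers (squarefree 0 is False, so value 0 at 0).\<close>
definition fm :: "real \<Rightarrow> real \<Rightarrow> real \<Rightarrow> nat \<Rightarrow> real" where
  "fm A \<gamma> N n = (if squarefree n then (\<Prod>p\<in>prime_factors n. fp A \<gamma> N p) else 0)"

definition hm :: "nat \<Rightarrow> real" where
  "hm n = (\<Prod>p\<in>prime_factors n. real p / (real p + 1))"

definition AN :: "real \<Rightarrow> real \<Rightarrow> real \<Rightarrow> real" where
  "AN A \<gamma> N = (\<Sum>\<^sub>\<infinity>n::nat. fm A \<gamma> N n * hm n / real n powr (sig A N)
        * (\<Sum>q | q dvd n. fm A \<gamma> N q * real q powr (sig A N)))
      / (\<Sum>\<^sub>\<infinity>n::nat. (fm A \<gamma> N n)^2)"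

definition SN :: "real \<Rightarrow> real \<Rightarrow> real \<Rightarrow> real \<Rightarrow> real" where
  "SN A \<gamma> \<epsilon> N = (\<Sum>\<^sub>\<infinity>n::nat. fm A \<gamma> N n * hm n / real n powr (sig A N)
        * (\<Sum>q | q dvd n \<and> real q \<le> real n / N powr \<epsilon>. fm A \<gamma> N q * real q powr (sig A N)))
      / (\<Sum>\<^sub>\<infinity>n::nat. (fm A \<gamma> N n)^2)"

end

theory Submission
  imports Defs "HOL-Real_Asymp.Real_Asymp"
begin

lemma pf_prod: "finite S \<Longrightarrow> \<forall>p\<in>S. prime (p::nat) \<Longrightarrow> prime_factors (\<Prod>S) = S"
proof -
  assume f: "finite S" and pr: "\<forall>p\<in>S. prime (p::nat)"
  have "0 \<notin> id ` S" using pr by auto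
  then have "prime_factors (prod id S) = \<Union>((prime_factors \<circ> id) ` S)"
    using prime_factors_prod[OF f] by blast
  also have "\<dots> = S" using pr by (auto simp: prime_prime_factors)
  finally show ?thesis by simp
qed

lemma sqf_prod: "\<forall>p\<in>S. prime (p::nat) \<Longrightarrow> squarefree (\<Prod>S)"
  by (rule squarefree_prod_coprime) (auto simp: primes_coprime squarefree_prime)

lemma sqf_eq_prod: "squarefree (n::nat) \<Longrightarrow> n = \<Prod>(prime_factors n)"
proof -
  assume s: "squarefree n"
  then have n0: "n \<noteq> 0" by (metis not_squarefree_0)
  have m: "\<forall>p\<in>prime_factors n. multiplicity p n = 1"
    using squarefree_factorial_semiring'[OF n0] s by blast
  have "n = normalize n" by simp
  also have "\<dots> = (\<Prod>p \<in> prime_factors n. p ^ multiplicity p n)"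
    using prod_prime_factors[OF n0] by simp
  also have "\<dots> = \<Prod>(prime_factors n)"
    by (rule prod.cong) (use m in auto)
  finally show ?thesis .
qed

lemma prod_pos_nat: "finite S \<Longrightarrow> \<forall>p\<in>S. prime (p::nat) \<Longrightarrow> \<Prod>S > 0"
  by (metis not_prime_0 gr0I prod_zero_iff)

lemma divisors_prod:
  assumes "finite S" "\<forall>p\<in>S. prime (p::nat)"
  shows "{q. q dvd \<Prod>S} = \<Prod> ` Pow S" and "inj_on \<Prod> (Pow S)"
proof -
  show "inj_on \<Prod> (Pow S)"
  proof (rule inj_onI)
    fix X Y assume X: "X \<in> Pow S" and Y: "Y \<in> Pow S" and e: "\<Prod>X = \<Prod>Y"
    have "X = prime_factors (\<Prod>X)" using X assms by (subst pf_prod) (auto intro: finite_subset)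
    also have "\<dots> = prime_factors (\<Prod>Y)" using e by simp
    also have "\<dots> = Y" using Y assms by (subst pf_prod) (auto intro: finite_subset)
    finally show "X = Y" .
  qed
  show "{q. q dvd \<Prod>S} = \<Prod> ` Pow S"
  proof safe
    fix q assume q: "q dvd \<Prod>S"
    have n0: "\<Prod>S \<noteq> 0" using prod_pos_nat[OF assms] by simp
    have "squarefree q" using squarefree_mono[OF q sqf_prod[OF assms(2)]] .
    then have "q = \<Prod>(prime_factors q)" by (rule sqf_eq_prod)
    moreover have "prime_factors q \<subseteq> S"
      using dvd_prime_factors[OF n0 q] pf_prod[OF assms] by simp
    ultimately show "q \<in> \<Prod> ` Pow S" by blast
  next
    fix T assume "T \<subseteq> S"
    then show "\<Prod>T dvd \<Prod>S" using assms(1) by (simp add: prod_dvd_prod_subset)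
  qed
qed



definition fmG :: "(nat \<Rightarrow> real) \<Rightarrow> nat \<Rightarrow> real" where
  "fmG F n = (if squarefree n then (\<Prod>p\<in>prime_factors n. F p) else 0)"

lemma fm_eq: "fm A \<gamma> N = fmG (fp A \<gamma> N)"
  by (auto simp: fm_def fmG_def fun_eq_iff)

lemma fmG_prod: "finite S \<Longrightarrow> \<forall>p\<in>S. prime (p::nat) \<Longrightarrow> fmG F (\<Prod>S) = (\<Prod>p\<in>S. F p)"
  by (simp add: fmG_def sqf_prod pf_prod)

lemma hm_prod: "finite S \<Longrightarrow> \<forall>p\<in>S. prime (p::nat) \<Longrightarrow> hm (\<Prod>S) = (\<Prod>p\<in>S. real p / (real p + 1))"
  by (simp add: hm_def pf_prod)

lemma powr_prod': "real (\<Prod>S) powr s = (\<Prod>p\<in>S. real p powr s)"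
  by (simp add: of_nat_prod prod_powr_distrib)

lemma fmG_support:
  assumes "\<And>p. F p \<noteq> 0 \<Longrightarrow> p \<in> P" "fmG F n \<noteq> 0"
  shows "n \<in> \<Prod> ` Pow P"
proof -
  have s: "squarefree n" using assms(2) by (auto simp: fmG_def split: if_splits)
  then have "(\<Prod>p\<in>prime_factors n. F p) \<noteq> 0" using assms(2) by (simp add: fmG_def)
  then have "prime_factors n \<subseteq> P" using assms(1) by (auto simp: prod_zero_iff)
  moreover have "n = \<Prod>(prime_factors n)" using s by (rule sqf_eq_prod)
  ultimately show ?thesis by blast
qed

lemma infsum_reduce:
  assumes fin: "finite P" and pr: "\<forall>p\<in>P. prime (p::nat)" and supp: "\<And>p. F p \<noteq> 0 \<Longrightarrow> p \<in> P"
  shows "(\<Sum>\<^sub>\<infinity>n. fmG F n * G n) = (\<Sum>S\<in>Pow P. (\<Prod>p\<in>S. F p) * G (\<Prod>S))"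
proof -
  have "(\<Sum>\<^sub>\<infinity>n. fmG F n * G n) = (\<Sum>\<^sub>\<infinity>n\<in>\<Prod> ` Pow P. fmG F n * G n)"
    by (rule infsum_cong_neutral) (use fmG_support[OF supp] in auto)
  also have "\<dots> = (\<Sum>n\<in>\<Prod> ` Pow P. fmG F n * G n)" using fin by simp
  also have "\<dots> = (\<Sum>S\<in>Pow P. fmG F (\<Prod>S) * G (\<Prod>S))"
    using divisors_prod(2)[OF fin pr] by (simp add: sum.reindex)
  also have "\<dots> = (\<Sum>S\<in>Pow P. (\<Prod>p\<in>S. F p) * G (\<Prod>S))"
    by (rule sum.cong) (use fin pr in \<open>auto intro!: fmG_prod intro: finite_subset\<close>)
  finally show ?thesis .
qed

lemma inner_reduce:
  assumes fin: "finite S" and pr: "\<forall>p\<in>S. prime (p::nat)"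
  shows "(\<Sum>q | q dvd \<Prod>S \<and> C q. fmG F q * g q) =
         (\<Sum>T | T \<in> Pow S \<and> C (\<Prod>T). (\<Prod>p\<in>T. F p) * g (\<Prod>T))"
proof -
  have e: "{q. q dvd \<Prod>S \<and> C q} = \<Prod> ` {T. T \<in> Pow S \<and> C (\<Prod>T)}"
  proof -
    have "\<And>q. q dvd \<Prod>S \<longleftrightarrow> q \<in> \<Prod> ` Pow S" using divisors_prod(1)[OF fin pr] by blast
    then show ?thesis by auto
  qed
  have i: "inj_on \<Prod> {T. T \<in> Pow S \<and> C (\<Prod>T)}"
    using divisors_prod(2)[OF fin pr] by (rule inj_on_subset) auto
  show ?thesis unfolding e
    by (subst sum.reindex[OF i]) (rule sum.cong, auto intro!: fmG_prod intro: finite_subset simp: fin pr)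
qed



lemma term_split:
  fixes F hh ps :: "nat \<Rightarrow> real"
  assumes fin: "finite S" and T: "T \<subseteq> S" and pos: "\<forall>p\<in>S. ps p > 0"
  shows "(\<Prod>p\<in>S. F p) * ((\<Prod>p\<in>S. hh p) / (\<Prod>p\<in>S. ps p) * ((\<Prod>p\<in>T. F p) * (\<Prod>p\<in>T. ps p)))
       = (\<Prod>p\<in>T. F p ^ 2 * hh p) * (\<Prod>p\<in>S - T. F p * hh p / ps p)"
proof -
  have s1: "(\<Prod>p\<in>S. g p) = (\<Prod>p\<in>S-T. g p) * (\<Prod>p\<in>T. g p)" for g :: "nat \<Rightarrow> real"
    using prod.subset_diff[OF T fin] .
  have a: "(\<Prod>p\<in>T. F p ^ 2 * hh p) = (\<Prod>p\<in>T. F p) * (\<Prod>p\<in>T. F p) * (\<Prod>p\<in>T. hh p)"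
    by (simp add: prod.distrib power2_eq_square)
  have b: "(\<Prod>p\<in>S - T. F p * hh p / ps p) = (\<Prod>p\<in>S-T. F p) * (\<Prod>p\<in>S-T. hh p) / (\<Prod>p\<in>S-T. ps p)"
    by (simp add: prod.distrib prod_dividef)
  have n1: "(\<Prod>p\<in>T. ps p) \<noteq> 0" using pos T by (intro less_imp_neq[symmetric] prod_pos) auto
  have n2: "(\<Prod>p\<in>S-T. ps p) \<noteq> 0" using pos by (intro less_imp_neq[symmetric] prod_pos) auto
  show ?thesis unfolding a b s1[of F] s1[of hh] s1[of ps]
    using n1 n2 by (simp add: field_simps)
qed

definition NUMG :: "(nat \<Rightarrow> real) \<Rightarrow> real \<Rightarrow> (nat \<Rightarrow> nat \<Rightarrow> bool) \<Rightarrow> real" where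
  "NUMG F s C = (\<Sum>\<^sub>\<infinity>n::nat. fmG F n * hm n / real n powr s
        * (\<Sum>q | q dvd n \<and> C n q. fmG F q * real q powr s))"

lemma NUMG_formula:
  assumes fin: "finite P" and pr: "\<forall>p\<in>P. prime (p::nat)" and supp: "\<And>p. F p \<noteq> 0 \<Longrightarrow> p \<in> P"
  shows "NUMG F s C = (\<Sum>S\<in>Pow P. \<Sum>T | T \<in> Pow S \<and> C (\<Prod>S) (\<Prod>T).
            (\<Prod>p\<in>T. F p ^ 2 * (real p / (real p + 1))) * (\<Prod>p\<in>S - T. F p * (real p / (real p + 1)) / real p powr s))"
proof -
  define G where "G n = hm n / real n powr s * (\<Sum>q | q dvd n \<and> C n q. fmG F q * real q powr s)" for n
  have "NUMG F s C = (\<Sum>\<^sub>\<infinity>n. fmG F n * G n)" unfolding NUMG_def G_def by (simp add: mult.assoc)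
  also have "\<dots> = (\<Sum>S\<in>Pow P. (\<Prod>p\<in>S. F p) * G (\<Prod>S))" by (rule infsum_reduce[OF fin pr supp])
  also have "\<dots> = (\<Sum>S\<in>Pow P. \<Sum>T | T \<in> Pow S \<and> C (\<Prod>S) (\<Prod>T).
            (\<Prod>p\<in>T. F p ^ 2 * (real p / (real p + 1))) * (\<Prod>p\<in>S - T. F p * (real p / (real p + 1)) / real p powr s))"
  proof (rule sum.cong[OF refl])
    fix S assume S: "S \<in> Pow P"
    have fS: "finite S" using S fin by (auto intro: finite_subset)
    have pS: "\<forall>p\<in>S. prime p" using S pr by auto
    have G: "G (\<Prod>S) = (\<Prod>p\<in>S. real p / (real p + 1)) / (\<Prod>p\<in>S. real p powr s) *
        (\<Sum>T | T \<in> Pow S \<and> C (\<Prod>S) (\<Prod>T). (\<Prod>p\<in>T. F p) * (\<Prod>p\<in>T. real p powr s))"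
      unfolding G_def hm_prod[OF fS pS] powr_prod'
      by (subst inner_reduce[OF fS pS]) (simp add: powr_prod' prod_powr_distrib)
    show "(\<Prod>p\<in>S. F p) * G (\<Prod>S) = (\<Sum>T | T \<in> Pow S \<and> C (\<Prod>S) (\<Prod>T).
            (\<Prod>p\<in>T. F p ^ 2 * (real p / (real p + 1))) * (\<Prod>p\<in>S - T. F p * (real p / (real p + 1)) / real p powr s))"
      unfolding G sum_distrib_left
    proof (rule sum.cong[OF refl])
      fix T assume "T \<in> {T. T \<in> Pow S \<and> C (\<Prod>S) (\<Prod>T)}"
      then have T: "T \<subseteq> S" by auto
      have pos: "\<forall>p\<in>S. real p powr s > 0" using pS by (auto simp: prime_gt_0_nat)
      show "(\<Prod>p\<in>S. F p) * ((\<Prod>p\<in>S. real p / (real p + 1)) / (\<Prod>p\<in>S. real p powr s) *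
          ((\<Prod>p\<in>T. F p) * (\<Prod>p\<in>T. real p powr s))) =
          (\<Prod>p\<in>T. F p ^ 2 * (real p / (real p + 1))) * (\<Prod>p\<in>S - T. F p * (real p / (real p + 1)) / real p powr s)"
        by (rule term_split[OF fS T pos])
    qed
  qed
  finally show ?thesis .
qed

lemma double_prod:
  fixes a b :: "nat \<Rightarrow> real"
  assumes "finite P"
  shows "(\<Sum>S\<in>Pow P. \<Sum>T\<in>Pow S. (\<Prod>p\<in>T. a p) * (\<Prod>p\<in>S - T. b p)) = (\<Prod>p\<in>P. 1 + a p + b p)"
proof -
  have "(\<Prod>p\<in>P. 1 + a p + b p) = (\<Prod>p\<in>P. (a p + b p) + 1)" by (simp add: add_ac)
  also have "\<dots> = (\<Sum>S\<in>Pow P. (\<Prod>p\<in>S. a p + b p) * (\<Prod>p\<in>P-S. 1))" by (rule prod_add[OF assms])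
  also have "\<dots> = (\<Sum>S\<in>Pow P. \<Sum>T\<in>Pow S. (\<Prod>p\<in>T. a p) * (\<Prod>p\<in>S - T. b p))"
  proof (rule sum.cong[OF refl])
    fix S assume "S \<in> Pow P"
    then have "finite S" using assms by (auto intro: finite_subset)
    then show "(\<Prod>p\<in>S. a p + b p) * (\<Prod>p\<in>P-S. 1) = (\<Sum>T\<in>Pow S. (\<Prod>p\<in>T. a p) * (\<Prod>p\<in>S - T. b p))"
      using prod_add by simp
  qed
  finally show ?thesis by simp
qed



lemma Pow_Collect: "{T. T \<subseteq> S} = Pow S" by auto

lemma rankin_bound:
  assumes fin: "finite P" and pr: "\<forall>p\<in>P. prime (p::nat)" and supp: "\<And>p. F p \<noteq> 0 \<Longrightarrow> p \<in> P"
    and Fnn: "\<And>p. F p \<ge> 0" and X: "X > 0" and d: "\<delta> \<ge> 0"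
  shows "NUMG F s (\<lambda>n q. True) = (\<Prod>p\<in>P. 1 + F p ^ 2 * (real p / (real p + 1)) + F p * (real p / (real p + 1)) / real p powr s)"
    and "NUMG F s (\<lambda>n q. real q \<le> real n / X) \<le> X powr (-\<delta>) *
          (\<Prod>p\<in>P. 1 + F p ^ 2 * (real p / (real p + 1)) + F p * (real p / (real p + 1)) / real p powr s * real p powr \<delta>)"
    and "NUMG F s (\<lambda>n q. real q \<le> real n / X) \<ge> 0"
proof -
  define a where "a p = F p ^ 2 * (real p / (real p + 1))" for p
  define b where "b p = F p * (real p / (real p + 1)) / real p powr s" for p
  have ann: "a p \<ge> 0" for p unfolding a_def using Fnn by simp
  have bnn: "b p \<ge> 0" for p unfolding b_def using Fnn by simp
  show "NUMG F s (\<lambda>n q. True) = (\<Prod>p\<in>P. 1 + F p ^ 2 * (real p / (real p + 1)) + F p * (real p / (real p + 1)) / real p powr s)"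
    using NUMG_formula[of P F, OF fin pr supp, where s=s and C="\<lambda>n q. True"] double_prod[OF fin, of a b] by (simp add: a_def b_def Pow_Collect)
  have eq2: "NUMG F s (\<lambda>n q. real q \<le> real n / X) = (\<Sum>S\<in>Pow P. \<Sum>T | T \<in> Pow S \<and> real (\<Prod>T) \<le> real (\<Prod>S) / X.
            (\<Prod>p\<in>T. a p) * (\<Prod>p\<in>S - T. b p))"
    using NUMG_formula[of P F, OF fin pr supp, where s=s and C="\<lambda>n q. real q \<le> real n / X"] unfolding a_def b_def by simp
  show "NUMG F s (\<lambda>n q. real q \<le> real n / X) \<ge> 0" unfolding eq2
    by (intro sum_nonneg mult_nonneg_nonneg prod_nonneg ann bnn)
  have "NUMG F s (\<lambda>n q. real q \<le> real n / X) \<le> (\<Sum>S\<in>Pow P. \<Sum>T\<in>Pow S.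
            X powr (-\<delta>) * ((\<Prod>p\<in>T. a p) * (\<Prod>p\<in>S - T. b p * real p powr \<delta>)))"
    unfolding eq2
  proof (rule sum_mono)
    fix S assume S: "S \<in> Pow P"
    have fS: "finite S" using S fin by (auto intro: finite_subset)
    have pS: "\<forall>p\<in>S. prime p" using S pr by auto
    have "(\<Sum>T | T \<in> Pow S \<and> real (\<Prod>T) \<le> real (\<Prod>S) / X. (\<Prod>p\<in>T. a p) * (\<Prod>p\<in>S - T. b p))
       \<le> (\<Sum>T | T \<in> Pow S \<and> real (\<Prod>T) \<le> real (\<Prod>S) / X. X powr (-\<delta>) * ((\<Prod>p\<in>T. a p) * (\<Prod>p\<in>S - T. b p * real p powr \<delta>)))"
    proof (rule sum_mono)
      fix T assume "T \<in> {T. T \<in> Pow S \<and> real (\<Prod>T) \<le> real (\<Prod>S) / X}"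
      then have T: "T \<subseteq> S" and c: "real (\<Prod>T) \<le> real (\<Prod>S) / X" by auto
      have fT: "finite T" using T fS by (auto intro: finite_subset)
      have pT0: "\<Prod>T > 0" using prod_pos_nat[OF fT] pS T by auto
      then have pT: "real (\<Prod>T) > 0" by (simp only: of_nat_0_less_iff)
      have spl: "real (\<Prod>S) = real (\<Prod>(S-T)) * real (\<Prod>T)"
        using prod.subset_diff[OF T fS, of id] by simp
      have "X \<le> real (\<Prod>(S-T))"
        using c pT X unfolding spl by (simp add: field_simps)
      then have "X powr \<delta> \<le> real (\<Prod>(S-T)) powr \<delta>" using X d by (intro powr_mono2) auto
      also have "\<dots> = (\<Prod>p\<in>S-T. real p powr \<delta>)" by (rule powr_prod')
      finally have "1 \<le> X powr (-\<delta>) * (\<Prod>p\<in>S-T. real p powr \<delta>)"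
        using X by (simp add: powr_minus field_simps)
      then have "(\<Prod>p\<in>T. a p) * (\<Prod>p\<in>S - T. b p) \<le> (\<Prod>p\<in>T. a p) * (\<Prod>p\<in>S - T. b p) * (X powr (-\<delta>) * (\<Prod>p\<in>S-T. real p powr \<delta>))"
        using mult_left_mono[of 1 _ "(\<Prod>p\<in>T. a p) * (\<Prod>p\<in>S - T. b p)"]
        by (simp add: mult_nonneg_nonneg prod_nonneg ann bnn)
      also have "\<dots> = X powr (-\<delta>) * ((\<Prod>p\<in>T. a p) * (\<Prod>p\<in>S - T. b p * real p powr \<delta>))"
        by (simp add: prod.distrib)
      finally show "(\<Prod>p\<in>T. a p) * (\<Prod>p\<in>S - T. b p) \<le> X powr (-\<delta>) * ((\<Prod>p\<in>T. a p) * (\<Prod>p\<in>S - T. b p * real p powr \<delta>))" .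
    qed
    also have "\<dots> \<le> (\<Sum>T\<in>Pow S. X powr (-\<delta>) * ((\<Prod>p\<in>T. a p) * (\<Prod>p\<in>S - T. b p * real p powr \<delta>)))"
      by (rule sum_mono2) (use fS in \<open>auto intro!: mult_nonneg_nonneg prod_nonneg ann bnn\<close>)
    finally show "(\<Sum>T | T \<in> Pow S \<and> real (\<Prod>T) \<le> real (\<Prod>S) / X. (\<Prod>p\<in>T. a p) * (\<Prod>p\<in>S - T. b p))
       \<le> (\<Sum>T\<in>Pow S. X powr (-\<delta>) * ((\<Prod>p\<in>T. a p) * (\<Prod>p\<in>S - T. b p * real p powr \<delta>)))" .
  qed
  also have "\<dots> = X powr (-\<delta>) * (\<Prod>p\<in>P. 1 + a p + b p * real p powr \<delta>)"
  proof -
    have "(\<Sum>S\<in>Pow P. \<Sum>T\<in>Pow S.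
            X powr (-\<delta>) * ((\<Prod>p\<in>T. a p) * (\<Prod>p\<in>S - T. b p * real p powr \<delta>))) =
          X powr (-\<delta>) * (\<Sum>S\<in>Pow P. \<Sum>T\<in>Pow S. (\<Prod>p\<in>T. a p) * (\<Prod>p\<in>S - T. b p * real p powr \<delta>))"
      by (simp add: sum_distrib_left)
    then show ?thesis using double_prod[OF fin, of a "\<lambda>p. b p * real p powr \<delta>"] by simp
  qed
  finally show "NUMG F s (\<lambda>n q. real q \<le> real n / X) \<le> X powr (-\<delta>) *
          (\<Prod>p\<in>P. 1 + F p ^ 2 * (real p / (real p + 1)) + F p * (real p / (real p + 1)) / real p powr s * real p powr \<delta>)"
    by (simp add: a_def b_def)
qed

lemma prod_exp_bound:
  fixes a b c :: "nat \<Rightarrow> real"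
  assumes "finite P" "\<And>p. a p \<ge> 0" "\<And>p. b p \<ge> 0" "\<And>p. c p \<ge> 0"
  shows "(\<Prod>p\<in>P. 1 + a p + c p) \<le> exp (\<Sum>p\<in>P. c p) * (\<Prod>p\<in>P. 1 + a p + b p)"
proof -
  have "(\<Prod>p\<in>P. 1 + a p + c p) \<le> (\<Prod>p\<in>P. exp (c p) * (1 + a p + b p))"
  proof (rule prod_mono)
    fix p assume "p \<in> P"
    have "1 + c p \<le> exp (c p)" by (rule exp_ge_add_one_self)
    then have "(1 + c p) * (1 + a p + b p) \<le> exp (c p) * (1 + a p + b p)"
      using assms by (intro mult_right_mono) (auto simp: add_nonneg_nonneg)
    moreover have "1 + a p + c p \<le> (1 + c p) * (1 + a p + b p)"
      using assms(2-4)[of p] by (simp add: algebra_simps mult_nonneg_nonneg add_nonneg_nonneg)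
    ultimately show "0 \<le> 1 + a p + c p \<and> 1 + a p + c p \<le> exp (c p) * (1 + a p + b p)"
      using assms(2-4)[of p] by linarith
  qed
  also have "\<dots> = exp (\<Sum>p\<in>P. c p) * (\<Prod>p\<in>P. 1 + a p + b p)"
    using assms(1) by (simp add: prod.distrib exp_sum)
  finally show ?thesis .
qed



lemma SN_eq: "SN A \<gamma> \<epsilon> N = NUMG (fp A \<gamma> N) (sig A N) (\<lambda>n q. real q \<le> real n / N powr \<epsilon>) / (\<Sum>\<^sub>\<infinity>n::nat. (fm A \<gamma> N n)^2)"
  unfolding SN_def NUMG_def fm_eq by simp

lemma AN_eq: "AN A \<gamma> N = NUMG (fp A \<gamma> N) (sig A N) (\<lambda>n q. True) / (\<Sum>\<^sub>\<infinity>n::nat. (fm A \<gamma> N n)^2)"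
  unfolding AN_def NUMG_def fm_eq by simp

lemma pointwise:
  fixes A \<gamma> \<epsilon> c N :: real
  assumes A: "A > 0" and eps: "\<epsilon> > 0" and c: "c > 0" and N1: "N > 1" and L1': "ln N > 1"
    and l_ge: "ln (ln N) \<ge> exp 1"
    and s1: "A / ln (ln N) \<le> 1/2"
    and g4: "ln (ln N) powr \<gamma> \<le> ln (ln N) / 4"
    and l3: "ln (ln (ln N)) \<le> ln (ln N) / 2"
    and fin_ineq: "ln N powr (3/4) * ln (ln N) - \<epsilon> * ln N / (2 * ln (ln N)) \<le> ln c"
  shows "\<bar>SN A \<gamma> \<epsilon> N\<bar> \<le> c * \<bar>AN A \<gamma> N\<bar>"
proof -
  define L where "L = ln N"
  define l where "l = ln L"
  define \<sigma> where "\<sigma> = sig A N"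
  define pmin where "pmin = exp 1 * L * l"
  define pmax where "pmax = exp (l powr \<gamma>) * L * l"
  define P where "P = Pset \<gamma> N"
  define F where "F = fp A \<gamma> N"
  define K where "K = L powr (1 - \<sigma>) * l powr \<sigma> / ln l powr (1 - \<sigma>)"
  define \<delta> where "\<delta> = 1 / (2 * l)"
  have le: "l \<ge> exp 1" using l_ge by (simp add: l_def L_def)
  have l1: "l \<ge> 1" using le exp_ge_add_one_self[of 1] by linarith
  have lpos: "l > 0" using l1 by simp
  have L1: "L > 1" using L1' unfolding L_def .
  have "ln (exp 1) \<le> ln l" using le lpos by (subst ln_le_cancel_iff) auto
  then have ln_l: "ln l \<ge> 1" by simp
  have sig_def': "\<sigma> = 1/2 + A / l" unfolding \<sigma>_def sig_def l_def L_def ..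
  have sig_lo: "\<sigma> \<ge> 1/2" using A lpos by (simp add: sig_def')
  have sig_hi: "\<sigma> \<le> 1" using s1 unfolding sig_def' l_def L_def by linarith
  have Pdef: "P = {p. prime p \<and> pmin < real p \<and> real p \<le> pmax}"
    unfolding P_def Pset_def pmin_def pmax_def l_def L_def by simp
  have Fdef: "F p = (if p \<in> P then K * (1 / (real p powr \<sigma> * (ln (real p) - l - ln l))) else 0)" for p
    unfolding F_def fp_def K_def P_def \<sigma>_def l_def L_def by simp
  have pmin_pos: "pmin > 0" unfolding pmin_def using L1 lpos by simp
  have ln_pmin: "ln pmin = 1 + l + ln l" unfolding pmin_def using L1 lpos
    by (simp add: ln_mult l_def)
  have ln_pmax: "ln pmax = l powr \<gamma> + l + ln l" unfolding pmax_def using L1 lpos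
    by (simp add: ln_mult l_def)
  have Pprime: "\<forall>p\<in>P. prime p" unfolding Pdef by auto
  have Psub: "P \<subseteq> {1..nat \<lfloor>pmax\<rfloor>}"
  proof
    fix p assume "p \<in> P"
    then have "prime p" "real p \<le> pmax" unfolding Pdef by auto
    then show "p \<in> {1..nat \<lfloor>pmax\<rfloor>}" using prime_ge_1_nat[of p] by (auto simp: le_nat_iff le_floor_iff)
  qed
  have finP: "finite P" using Psub finite_subset by blast
  have pmax_pos: "pmax > 0" unfolding pmax_def using L1 lpos by simp
  have cardP: "real (card P) \<le> pmax"
  proof -
    have "card P \<le> card {1..nat \<lfloor>pmax\<rfloor>}" by (rule card_mono) (use Psub in auto)
    then have "real (card P) \<le> real (nat \<lfloor>pmax\<rfloor>)" by simp
    also have "\<dots> \<le> pmax" using pmax_pos by linarith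
    finally show ?thesis .
  qed
  have Dp: "ln (real p) - l - ln l > 1" if "p \<in> P" for p
  proof -
    have "pmin < real p" using that unfolding Pdef by auto
    then have "ln pmin < ln (real p)" using pmin_pos by simp
    then show ?thesis using ln_pmin by simp
  qed
  have Knn: "K \<ge> 0" unfolding K_def by simp
  have Fnn: "F p \<ge> 0" for p using Dp[of p] Knn by (auto simp: Fdef)
  have supp: "F p \<noteq> 0 \<Longrightarrow> p \<in> P" for p by (auto simp: Fdef split: if_splits)
  define b' where "b' p = F p * (real p / (real p + 1)) / real p powr \<sigma> * real p powr \<delta>" for p
  have b'_bound: "b' p \<le> exp 1 * K / pmin" if "p \<in> P" for p
  proof -
    have pP: "prime p" "pmin < real p" "real p \<le> pmax" using that unfolding Pdef by auto
    have ppos: "real p > 0" using pP(1) by (simp add: prime_gt_0_nat)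
    have "ln (real p) \<le> ln pmax" using pP(3) ppos by simp
    also have "\<dots> \<le> 2 * l" using ln_pmax g4 l3 lpos unfolding l_def L_def by linarith
    finally have "\<delta> * ln (real p) \<le> 1" unfolding \<delta>_def using lpos by (simp add: field_simps)
    then have pd: "real p powr \<delta> \<le> exp 1" using ppos by (simp add: powr_def)
    have hh: "real p / (real p + 1) \<le> 1" by simp
    have "real p powr \<sigma> * real p powr \<sigma> = real p powr (2 * \<sigma>)" by (simp add: powr_add[symmetric])
    also have "\<dots> \<ge> real p powr 1" using sig_lo ppos pP(1) by (intro powr_mono) (auto simp: prime_ge_1_nat)
    finally have pp: "real p powr \<sigma> * real p powr \<sigma> \<ge> real p" using ppos by simp
    have D1: "ln (real p) - l - ln l \<ge> 1" using Dp[OF that] by simp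
    have "real p \<le> (real p powr \<sigma> * real p powr \<sigma>) * (ln (real p) - l - ln l)"
    proof -
      have Qnn: "0 \<le> real p powr \<sigma> * real p powr \<sigma>" by simp
      have "(real p powr \<sigma> * real p powr \<sigma>) * 1 \<le> (real p powr \<sigma> * real p powr \<sigma>) * (ln (real p) - l - ln l)"
        by (rule mult_left_mono[OF D1 Qnn])
      then show ?thesis using pp by linarith
    qed
    then have q: "1 / (real p powr \<sigma> * (ln (real p) - l - ln l)) / real p powr \<sigma> \<le> 1 / real p"
      using ppos D1 by (simp add: field_simps)
    have "b' p = K * (1 / (real p powr \<sigma> * (ln (real p) - l - ln l)) / real p powr \<sigma>) * (real p / (real p + 1)) * real p powr \<delta>"
      unfolding b'_def Fdef using that by simp
    also have "\<dots> \<le> K * (1 / real p) * 1 * exp 1"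
    proof -
      have Enn: "0 \<le> 1 / (real p powr \<sigma> * (ln (real p) - l - ln l)) / real p powr \<sigma>"
        using D1 by simp
      have t1: "K * (1 / (real p powr \<sigma> * (ln (real p) - l - ln l)) / real p powr \<sigma>) \<le> K * (1 / real p)"
        by (rule mult_left_mono[OF q Knn])
      have t2: "K * (1 / (real p powr \<sigma> * (ln (real p) - l - ln l)) / real p powr \<sigma>) * (real p / (real p + 1)) \<le> K * (1 / real p) * 1"
        by (rule mult_mono[OF t1 hh]) (use Knn ppos in auto)
      show ?thesis
        by (rule mult_mono[OF t2 pd]) (use Knn ppos in auto)
    qed
    also have "\<dots> \<le> K * (1 / pmin) * 1 * exp 1"
      using Knn pP(2) pmin_pos by (intro mult_right_mono mult_left_mono) (auto simp: field_simps)
    finally show ?thesis by (simp add: mult.commute)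
  qed
  have b'nn: "b' p \<ge> 0" for p unfolding b'_def using Fnn by simp
  have sum_b': "(\<Sum>p\<in>P. b' p) \<le> K * exp (l powr \<gamma>)"
  proof -
    have "(\<Sum>p\<in>P. b' p) \<le> (\<Sum>p\<in>P. exp 1 * K / pmin)" by (rule sum_mono) (rule b'_bound)
    also have "\<dots> = real (card P) * (exp 1 * K / pmin)" by simp
    also have "\<dots> \<le> pmax * (exp 1 * K / pmin)" using cardP Knn pmin_pos by (intro mult_right_mono) auto
    also have "\<dots> = K * exp (l powr \<gamma>)" unfolding pmax_def pmin_def using L1 lpos by (simp add: field_simps)
    finally show ?thesis .
  qed
  have K_bound: "K \<le> L powr (1/2) * l"
  proof -
    have "L powr (1 - \<sigma>) \<le> L powr (1/2)" using L1 sig_lo by (intro powr_mono) auto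
    moreover have "l powr \<sigma> \<le> l powr 1" using l1 sig_hi by (intro powr_mono) auto
    moreover have "ln l powr (1 - \<sigma>) \<ge> 1" using ln_l sig_hi by (simp add: ge_one_powr_ge_zero)
    ultimately have "L powr (1 - \<sigma>) * l powr \<sigma> / ln l powr (1 - \<sigma>) \<le> L powr (1/2) * l powr 1 / 1"
      by (intro frac_le mult_mono) auto
    then show ?thesis unfolding K_def using lpos by simp
  qed
  have exp_bound: "exp (l powr \<gamma>) \<le> L powr (1/4)"
  proof -
    have "exp (l powr \<gamma>) \<le> exp (l / 4)" using g4 by (simp add: l_def L_def)
    also have "\<dots> = L powr (1/4)" using L1 by (simp add: powr_def l_def)
    finally show ?thesis .
  qed
  have Sb: "(\<Sum>p\<in>P. b' p) \<le> L powr (3/4) * l"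
  proof -
    have "(\<Sum>p\<in>P. b' p) \<le> (L powr (1/2) * l) * L powr (1/4)"
    proof -
      have "K * exp (l powr \<gamma>) \<le> (L powr (1/2) * l) * L powr (1/4)"
        by (rule mult_mono[OF K_bound exp_bound]) (use lpos in auto)
      then show ?thesis using sum_b' by linarith
    qed
    also have "\<dots> = L powr (3/4) * l" by (simp add: mult.commute mult.left_commute powr_add[symmetric])
    finally show ?thesis .
  qed
  define X where "X = N powr \<epsilon>"
  have Xpos: "X > 0" unfolding X_def using N1 by simp
  have dnn: "\<delta> \<ge> 0" unfolding \<delta>_def using lpos by simp
  have Xd: "X powr (-\<delta>) = exp (- (\<epsilon> * L / (2 * l)))"
  proof -
    have "(N powr \<epsilon>) powr (-(1/(2*l))) = N powr (\<epsilon> * (-(1/(2*l))))" by (rule powr_powr)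
    also have "\<dots> = exp (\<epsilon> * (-(1/(2*l))) * ln N)" using N1 by (simp add: powr_def)
    also have "\<dots> = exp (- (\<epsilon> * L / (2 * l)))" unfolding L_def by (simp add: field_simps)
    finally show ?thesis unfolding X_def \<delta>_def .
  qed
  have factor: "X powr (-\<delta>) * exp (\<Sum>p\<in>P. b' p) \<le> c"
  proof -
    have "X powr (-\<delta>) * exp (\<Sum>p\<in>P. b' p) = exp (- (\<epsilon> * L / (2 * l)) + (\<Sum>p\<in>P. b' p))"
      unfolding Xd by (simp add: exp_add[symmetric])
    also have "\<dots> \<le> exp (ln c)" using Sb fin_ineq by (simp add: L_def l_def)
    also have "\<dots> = c" using c by simp
    finally show ?thesis .
  qed
  note RB = rankin_bound[where P=P and F=F and X=X and \<delta>=\<delta> and s=\<sigma>, OF finP Pprime supp Fnn Xpos dnn]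
  define AA where "AA = NUMG F \<sigma> (\<lambda>n q. True)"
  define SS where "SS = NUMG F \<sigma> (\<lambda>n q. real q \<le> real n / X)"
  have AAe: "AA = (\<Prod>p\<in>P. 1 + F p ^ 2 * (real p / (real p + 1)) + F p * (real p / (real p + 1)) / real p powr \<sigma>)"
    unfolding AA_def by (rule RB(1))
  have AAnn: "AA \<ge> 0" unfolding AAe
    using Fnn by (intro prod_nonneg) (auto intro!: add_nonneg_nonneg mult_nonneg_nonneg)
  have SSnn: "SS \<ge> 0" unfolding SS_def by (rule RB(3))
  have "SS \<le> X powr (-\<delta>) * (\<Prod>p\<in>P. 1 + F p ^ 2 * (real p / (real p + 1)) + b' p)"
    unfolding SS_def b'_def using RB(2) .
  also have "\<dots> \<le> X powr (-\<delta>) * (exp (\<Sum>p\<in>P. b' p) * AA)"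
    unfolding AAe
    by (intro mult_left_mono prod_exp_bound finP b'nn) (auto simp: Fnn)
  also have "\<dots> \<le> c * AA"
    using factor AAnn by (simp add: mult.assoc[symmetric] mult_right_mono)
  finally have SA: "SS \<le> c * AA" .
  define D where "D = (\<Sum>\<^sub>\<infinity>n::nat. (fm A \<gamma> N n)^2)"
  have Dnn: "D \<ge> 0" unfolding D_def by (rule infsum_nonneg) simp
  have SNe: "SN A \<gamma> \<epsilon> N = SS / D" unfolding SN_eq SS_def D_def F_def \<sigma>_def X_def ..
  have ANe: "AN A \<gamma> N = AA / D" unfolding AN_eq AA_def D_def F_def \<sigma>_def ..
  show ?thesis unfolding SNe ANe using SA SSnn AAnn Dnn c
    by (simp add: divide_right_mono abs_of_nonneg)
qed


theorem proposition3p3: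
  fixes A \<gamma> \<epsilon> :: real
  assumes "A > 0" and "0 < \<gamma>" and "\<gamma> < 1 / (exp 1 - 1)" and "\<epsilon> > 0"
  shows "(\<lambda>N. SN A \<gamma> \<epsilon> N) \<in> o[at_top](\<lambda>N. AN A \<gamma> N)"
proof (rule landau_o.smallI)
  fix c :: real assume c: "c > 0"
  have e2: "exp 1 - 1 \<ge> (1::real)" using exp_ge_add_one_self[of 1] by simp
  have "1 / (exp 1 - 1) \<le> (1::real)" using e2 by (simp add: field_simps)
  then have g1: "\<gamma> < 1" using assms(3) by linarith
  have a1: "eventually (\<lambda>x::real. ln x \<le> x/2) at_top" by real_asymp
  have a2: "eventually (\<lambda>x::real. A / x \<le> 1/2) at_top" using assms(1) by real_asymp
  have a3: "eventually (\<lambda>x::real. x powr \<gamma> \<le> x/4) at_top" using g1 by real_asymp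
  have a4: "eventually (\<lambda>y::real. y powr (3/4) * ln y - \<epsilon>*y/(2*ln y) \<le> ln c) at_top"
    using assms(4) by real_asymp
  have ex: "eventually (\<lambda>x::real. x \<ge> exp 1 \<and> A / x \<le> 1/2 \<and> x powr \<gamma> \<le> x/4 \<and> ln x \<le> x/2) at_top"
    using eventually_ge_at_top[of "exp 1"] a1 a2 a3 by eventually_elim auto
  have ey: "eventually (\<lambda>y::real. y > 1 \<and> y powr (3/4) * ln y - \<epsilon>*y/(2*ln y) \<le> ln c) at_top"
    using eventually_gt_at_top[of 1] a4 by eventually_elim auto
  have LL: "filterlim (\<lambda>N::real. ln (ln N)) at_top at_top"
    by (rule filterlim_compose[OF ln_at_top ln_at_top])
  have ex': "eventually (\<lambda>N::real. ln (ln N) \<ge> exp 1 \<and> A / ln (ln N) \<le> 1/2 \<and>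
       ln (ln N) powr \<gamma> \<le> ln (ln N)/4 \<and> ln (ln (ln N)) \<le> ln (ln N)/2) at_top"
    by (rule eventually_compose_filterlim[OF ex LL])
  have ey': "eventually (\<lambda>N::real. ln N > 1 \<and> ln N powr (3/4) * ln (ln N) - \<epsilon> * ln N/(2*ln (ln N)) \<le> ln c) at_top"
    by (rule eventually_compose_filterlim[OF ey ln_at_top])
  show "eventually (\<lambda>N. norm (SN A \<gamma> \<epsilon> N) \<le> c * norm (AN A \<gamma> N)) at_top"
    using ex' ey' eventually_gt_at_top[of 1]
  proof eventually_elim
    case (elim N)
    then show ?case using pointwise[OF assms(1) assms(4) c, of N \<gamma>] by auto
  qed
qed

end
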